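(* Let $G$ be a nontrivial finite subgroup of $\mathrm{SO}(3)$ and let $g:\mathrm{SO}(3)\to\mathbb{R}^n$ be an embedding. Then there does not exist a continuous function $f:\mathrm{SO}(3)/G\to g[\mathrm{SO}(3)]$ such that $p_G(g^{-1}(f(\mathcal{R})))=\mathcal{R}$ for every $\mathcal{R}\in\mathrm{SO}(3)/G$.
   Context: $\mathrm{SO}(3)/G$ denotes the space of left cosets $RG$ ($R\in\mathrm{SO}(3)$) with the quotient topology, and $p_G:\mathrm{SO}(3)\to\mathrm{SO}(3)/G$, $R\mapsto RG$, is the quotient map. An embedding is a continuous injective map that is a homeomorphism onto its image $g[\mathrm{SO}(3)]$. *)

theory Defs
  imports "HOL-Analysis.Analysis"
begin

definition SO3 :: "(real^3^3) set" where
  "SO3 = {R. orthogonal_matrix R \<and> det R = 1}"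

definition SO3_top :: "(real^3^3) topology" where
  "SO3_top = subtopology euclidean SO3"

definition subgroup_SO3 :: "(real^3^3) set \<Rightarrow> bool" where
  "subgroup_SO3 G \<longleftrightarrow> G \<subseteq> SO3 \<and> mat 1 \<in> G \<and>
     (\<forall>A\<in>G. \<forall>B\<in>G. A ** B \<in> G) \<and> (\<forall>A\<in>G. matrix_inv A \<in> G)"

definition pG :: "(real^3^3) set \<Rightarrow> real^3^3 \<Rightarrow> (real^3^3) set" where
  "pG G R = {R ** A | A. A \<in> G}"

definition quotient_topology :: "'a topology \<Rightarrow> ('a \<Rightarrow> 'b) \<Rightarrow> 'b topology" where
  "quotient_topology X p =
     topology (\<lambda>U. U \<subseteq> p ` topspace X \<and> openin X {x \<in> topspace X. p x \<in> U})"

lemma istopology_quotient: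
  "istopology (\<lambda>U. U \<subseteq> p ` topspace X \<and> openin X {x \<in> topspace X. p x \<in> U})"
  unfolding istopology_def
proof (rule conjI, (rule allI)+, (rule impI)+)
  fix S T assume a: "S \<subseteq> p ` topspace X \<and> openin X {x \<in> topspace X. p x \<in> S}"
    "T \<subseteq> p ` topspace X \<and> openin X {x \<in> topspace X. p x \<in> T}"
  have e: "{x \<in> topspace X. p x \<in> S \<inter> T} =
        {x \<in> topspace X. p x \<in> S} \<inter> {x \<in> topspace X. p x \<in> T}" by blast
  have "openin X ({x \<in> topspace X. p x \<in> S} \<inter> {x \<in> topspace X. p x \<in> T})"
    using a by (intro openin_Int) simp_all
  moreover have "S \<inter> T \<subseteq> p ` topspace X" using a by blast
  ultimately show "S \<inter> T \<subseteq> p ` topspace X \<and> openin X {x \<in> topspace X. p x \<in> S \<inter> T}"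
    unfolding e by blast
next
  show "\<forall>K. (\<forall>S\<in>K. S \<subseteq> p ` topspace X \<and> openin X {x \<in> topspace X. p x \<in> S}) \<longrightarrow>
     \<Union>K \<subseteq> p ` topspace X \<and> openin X {x \<in> topspace X. p x \<in> \<Union>K}"
  proof (rule allI, rule impI)
  fix K assume a: "\<forall>S\<in>K. S \<subseteq> p ` topspace X \<and> openin X {x \<in> topspace X. p x \<in> S}"
  have e: "{x \<in> topspace X. p x \<in> \<Union>K} = (\<Union>S\<in>K. {x \<in> topspace X. p x \<in> S})" by blast
  have "openin X (\<Union>S\<in>K. {x \<in> topspace X. p x \<in> S})"
    using a by (intro openin_Union) blast
  moreover have "\<Union>K \<subseteq> p ` topspace X" using a by blast
  ultimately show "\<Union>K \<subseteq> p ` topspace X \<and> openin X {x \<in> topspace X. p x \<in> \<Union>K}"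
    unfolding e by blast
  qed
qed

lemma openin_quotient_topology:
  "openin (quotient_topology X p) U \<longleftrightarrow>
     U \<subseteq> p ` topspace X \<and> openin X {x \<in> topspace X. p x \<in> U}"
  unfolding quotient_topology_def topology_inverse'[OF istopology_quotient] ..

definition SO3_mod :: "(real^3^3) set \<Rightarrow> ((real^3^3) set) topology" where
  "SO3_mod G = quotient_topology SO3_top (pG G)"

end

theory Submission
  imports Defs
begin


definition Rz :: "real \<Rightarrow> real^3^3" where
  "Rz a = (\<chi> i j. if i = 1 \<and> j = 1 then cos a else if i = 1 \<and> j = 2 then - sin a
     else if i = 2 \<and> j = 1 then sin a else if i = 2 \<and> j = 2 then cos a
     else if i = 3 \<and> j = 3 then 1 else 0)"

definition Rx :: "real \<Rightarrow> real^3^3" where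
  "Rx a = (\<chi> i j. if i = 2 \<and> j = 2 then cos a else if i = 2 \<and> j = 3 then - sin a
     else if i = 3 \<and> j = 2 then sin a else if i = 3 \<and> j = 3 then cos a
     else if i = 1 \<and> j = 1 then 1 else 0)"

lemma cont_if_const[continuous_intros]: "continuous_on S f \<Longrightarrow> continuous_on S g \<Longrightarrow> continuous_on S (\<lambda>x. if c then f x else g x)"
  by (cases c) auto

lemma Rz_cont: "continuous_on S Rz"
  unfolding Rz_def by (intro continuous_on_vec_lambda continuous_intros)

lemma Rx_cont: "continuous_on S Rx"
  unfolding Rx_def by (intro continuous_on_vec_lambda continuous_intros)

lemma Rz_SO3: "Rz a \<in> SO3"
proof -
  have h: "sin a * sin a + cos a * cos a = 1" by (metis sin_cos_squared_add3 add.commute)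
  show ?thesis unfolding SO3_def orthogonal_matrix_def using h by (simp add: Rz_def vec_eq_iff forall_3 matrix_matrix_mult_def sum_3 transpose_def mat_def det_3)
qed

lemma Rx_SO3: "Rx a \<in> SO3"
proof -
  have h: "sin a * sin a + cos a * cos a = 1" by (metis sin_cos_squared_add3 add.commute)
  show ?thesis unfolding SO3_def orthogonal_matrix_def using h by (simp add: Rx_def vec_eq_iff forall_3 matrix_matrix_mult_def sum_3 transpose_def mat_def det_3)
qed

lemma SO3_eqs:
  assumes "C \<in> SO3"
  shows "\<And>i j. (\<Sum>k\<in>UNIV. C$k$i * C$k$j) = (if i = j then 1 else 0)"
    "\<And>i j. (\<Sum>k\<in>UNIV. C$i$k * C$j$k) = (if i = j then 1 else 0)" "det C = 1"
proof -
  have o: "transpose C ** C = mat 1" "C ** transpose C = mat 1" "det C = 1"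
    using assms by (auto simp: SO3_def orthogonal_matrix_def)
  fix i j
  show "(\<Sum>k\<in>UNIV. C$k$i * C$k$j) = (if i = j then 1 else 0)"
    using arg_cong[OF o(1), of "\<lambda>M. M$i$j"] by (simp add: matrix_matrix_mult_def transpose_def mat_def)
  show "(\<Sum>k\<in>UNIV. C$i$k * C$j$k) = (if i = j then 1 else 0)"
    using arg_cong[OF o(2), of "\<lambda>M. M$i$j"] by (simp add: matrix_matrix_mult_def transpose_def mat_def)
  show "det C = 1" by (rule o(3))
qed

lemma SO3_mul: "A \<in> SO3 \<Longrightarrow> B \<in> SO3 \<Longrightarrow> A ** B \<in> SO3"
  by (auto simp: SO3_def orthogonal_matrix_mul det_mul)

lemma SO3_transpose: "A \<in> SO3 \<Longrightarrow> transpose A \<in> SO3"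
  by (auto simp: SO3_def)

lemma SO3_id: "mat 1 \<in> SO3"
  by (simp add: SO3_def orthogonal_matrix_def)

lemma fix3:
  assumes C: "C \<in> SO3" and z: "C$1$3 = 0" "C$2$3 = 0" "C$3$3 = 1"
  shows "\<exists>c. C = Rz c"
proof -
  note e = SO3_eqs[OF C]
  have r3: "C$3$1 * C$3$1 + C$3$2 * C$3$2 + C$3$3 * C$3$3 = 1"
    using e(2)[of 3 3] by (simp add: sum_3)
  have "C$3$1 * C$3$1 + C$3$2 * C$3$2 = 0" using r3 z by simp
  then have z2: "C$3$1 = 0" "C$3$2 = 0"
    using sum_squares_eq_zero_iff by auto
  have c1: "C$1$1 * C$1$1 + C$2$1 * C$2$1 = 1"
    using e(1)[of 1 1] z2 by (simp add: sum_3)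
  have c2: "C$1$2 * C$1$2 + C$2$2 * C$2$2 = 1"
    using e(1)[of 2 2] z2 by (simp add: sum_3)
  have c12: "C$1$1 * C$1$2 + C$2$1 * C$2$2 = 0"
    using e(1)[of 1 2] z2 by (simp add: sum_3)
  have d: "C$1$1 * C$2$2 - C$1$2 * C$2$1 = 1"
    using e(3) z z2 by (simp add: det_3)
  have sq: "(C$1$2 + C$2$1) * (C$1$2 + C$2$1) + (C$2$2 - C$1$1) * (C$2$2 - C$1$1) = 0"
    using c1 c2 c12 d by (simp add: algebra_simps)
  then have "C$1$2 + C$2$1 = 0" "C$2$2 - C$1$1 = 0"
    using sum_squares_eq_zero_iff by auto
  then have q: "C$1$2 = - C$2$1" "C$2$2 = C$1$1" by simp_all
  obtain t where t: "C$1$1 = cos t" "C$2$1 = sin t"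
    using sincos_total_2pi[of "C$1$1" "C$2$1"] c1 by (auto simp: power2_eq_square)
  have "C = Rz t"
    using z z2 q t by (simp add: vec_eq_iff forall_3 Rz_def)
  then show ?thesis by blast
qed

lemma euler:
  assumes B: "B \<in> SO3"
  shows "\<exists>a b c. B = Rz a ** Rx b ** Rz c"
proof -
  note e = SO3_eqs[OF B]
  have u: "B$1$3 * B$1$3 + B$2$3 * B$2$3 + B$3$3 * B$3$3 = 1"
    using e(1)[of 3 3] by (simp add: sum_3)
  define s where "s = sqrt (B$1$3 * B$1$3 + B$2$3 * B$2$3)"
  have s0: "s \<ge> 0" by (simp add: s_def)
  have ss: "s * s = B$1$3 * B$1$3 + B$2$3 * B$2$3" unfolding s_def
    by (simp add: add_nonneg_nonneg)
  obtain b where b: "B$3$3 = cos b" "s = sin b"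
    using sincos_total_2pi[of "B$3$3" s] u ss by (auto simp: power2_eq_square algebra_simps)
  obtain a where a: "sin a * s = B$1$3" "- cos a * s = B$2$3"
  proof (cases "s = 0")
    case True
    then have "B$1$3 * B$1$3 + B$2$3 * B$2$3 = 0" using ss by simp
    then have "B$1$3 = 0" "B$2$3 = 0" using sum_squares_eq_zero_iff by auto
    then show ?thesis using that[of 0] True by simp
  next
    case False
    then have sp: "s > 0" using s0 by simp
    have ps: "B$1$3 * B$1$3 + B$2$3 * B$2$3 \<noteq> 0" using ss sp by (metis mult_pos_pos less_irrefl)
    have "(- B$2$3 / s)\<^sup>2 + (B$1$3 / s)\<^sup>2 = (B$1$3 * B$1$3 + B$2$3 * B$2$3) / (s * s)"
      by (simp add: power2_eq_square add_divide_distrib)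
    also have "\<dots> = 1" using ss ps by simp
    finally have "(- B$2$3 / s)\<^sup>2 + (B$1$3 / s)\<^sup>2 = 1" .
    then obtain t where "- B$2$3 / s = cos t" "B$1$3 / s = sin t"
      using sincos_total_2pi by metis
    then show ?thesis using that[of t] sp by (simp add: field_simps)
  qed
  define P where "P = Rz a ** Rx b"
  have P: "P \<in> SO3" unfolding P_def by (intro SO3_mul Rz_SO3 Rx_SO3)
  have "\<forall>k. P$k$3 = B$k$3"
    using a b unfolding P_def
    by (simp add: forall_3 Rz_def Rx_def matrix_matrix_mult_def sum_3 algebra_simps)
  then have col: "\<And>k. P$k$3 = B$k$3" by blast
  define C where "C = transpose P ** B"
  have C: "C \<in> SO3" unfolding C_def by (intro SO3_mul SO3_transpose P B)
  have "\<And>i. C$i$3 = (transpose P ** P)$i$3"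
    unfolding C_def by (simp add: matrix_matrix_mult_def col)
  then have "\<And>i. C$i$3 = mat 1 $i$3"
    using P by (simp add: SO3_def orthogonal_matrix_def)
  then have "C$1$3 = 0" "C$2$3 = 0" "C$3$3 = 1" by (simp_all add: mat_def)
  then obtain c where c: "C = Rz c" using fix3[OF C] by blast
  have "P ** C = (P ** transpose P) ** B" unfolding C_def by (simp add: matrix_mul_assoc)
  also have "\<dots> = B" using P by (simp add: SO3_def orthogonal_matrix_def)
  finally show ?thesis using c unfolding P_def by blast
qed

lemma continuous_on_matmul:
  fixes A :: "'a::topological_space \<Rightarrow> real^'n^'m" and B :: "'a \<Rightarrow> real^'p^'n"
  assumes "continuous_on S A" "continuous_on S B"
  shows "continuous_on S (\<lambda>x. A x ** B x)"
  unfolding matrix_matrix_mult_def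
  by (intro continuous_on_vec_lambda continuous_intros assms)

lemma continuous_on_transpose:
  fixes A :: "'a::topological_space \<Rightarrow> real^'n^'m"
  assumes "continuous_on S A"
  shows "continuous_on S (\<lambda>x. transpose (A x))"
  unfolding transpose_def
  by (intro continuous_on_vec_lambda continuous_intros assms)

lemma SO3_connected: "connected SO3"
proof -
  define E where "E = (\<lambda>x::real\<times>real\<times>real. Rz (fst x) ** Rx (fst (snd x)) ** Rz (snd (snd x)))"
  have "SO3 = E ` UNIV"
  proof
    show "SO3 \<subseteq> E ` UNIV"
    proof
      fix B assume "B \<in> SO3"
      then obtain a b c where "B = Rz a ** Rx b ** Rz c" using euler by blast
      then show "B \<in> E ` UNIV" unfolding E_def by (auto intro!: image_eqI[where x="(a,b,c)"])
    qed
    show "E ` UNIV \<subseteq> SO3" unfolding E_def by (auto intro!: SO3_mul Rz_SO3 Rx_SO3)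
  qed
  moreover have "continuous_on UNIV E" unfolding E_def
    by (intro continuous_on_matmul continuous_on_compose2[OF Rz_cont] continuous_on_compose2[OF Rx_cont]
        continuous_intros) auto
  ultimately show ?thesis
    by (metis connected_UNIV connected_continuous_image)
qed

lemma topspace_quotient: "topspace (quotient_topology X p) = p ` topspace X"
proof
  show "topspace (quotient_topology X p) \<subseteq> p ` topspace X"
    using openin_quotient_topology[of X p "topspace (quotient_topology X p)"] by simp
  have "{x \<in> topspace X. p x \<in> p ` topspace X} = topspace X" by auto
  then have "openin (quotient_topology X p) (p ` topspace X)"
    by (simp add: openin_quotient_topology)
  then show "p ` topspace X \<subseteq> topspace (quotient_topology X p)" by (rule openin_subset)
qed

lemma continuous_quotient: "continuous_map X (quotient_topology X p) p"
  unfolding continuous_map_def topspace_quotient openin_quotient_topology by auto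

lemma embedding_inv_cont:
  assumes "embedding_map X Y g"
  shows "continuous_map (subtopology Y (g ` topspace X)) X (inv_into (topspace X) g)"
proof -
  obtain k where k: "homeomorphic_maps X (subtopology Y (g ` topspace X)) g k"
    using assms unfolding embedding_map_def homeomorphic_map_maps by blast
  then have c: "continuous_map (subtopology Y (g ` topspace X)) X k" and
    kk: "\<And>x. x \<in> topspace X \<Longrightarrow> k (g x) = x"
    unfolding homeomorphic_maps_def by auto
  have inj: "inj_on g (topspace X)" using kk by (metis inj_on_inverseI)
  show ?thesis
  proof (rule continuous_map_eq[OF c])
    fix y assume "y \<in> topspace (subtopology Y (g ` topspace X))"
    then obtain x where x: "x \<in> topspace X" "y = g x" by auto
    then show "k y = inv_into (topspace X) g y" using kk inj by simp
  qed
qed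

lemma pG_self:
  assumes G: "subgroup_SO3 G" and B: "B \<in> G"
  shows "pG G B = G"
proof
  show "pG G B \<subseteq> G" using G B unfolding pG_def subgroup_SO3_def by auto
  have BS: "B \<in> SO3" using G B unfolding subgroup_SO3_def by auto
  then have "invertible B" unfolding invertible_def SO3_def orthogonal_matrix_def by blast
  then have inv: "B ** matrix_inv B = mat 1"
    unfolding invertible_def matrix_inv_def by (metis (mono_tags, lifting) someI_ex)
  show "G \<subseteq> pG G B"
  proof
    fix C assume C: "C \<in> G"
    have "C = B ** (matrix_inv B ** C)" by (simp add: matrix_mul_assoc inv)
    moreover have "matrix_inv B ** C \<in> G" using G B C unfolding subgroup_SO3_def by auto
    ultimately show "C \<in> pG G B" unfolding pG_def by blast
  qed
qed

theorem corollary10: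
  fixes G :: "(real^3^3) set" and g :: "real^3^3 \<Rightarrow> real^'n"
  assumes "subgroup_SO3 G" and "finite G" and "G \<noteq> {mat 1}"
    and "embedding_map SO3_top euclidean g"
  shows "\<not> (\<exists>f. continuous_map (SO3_mod G) (subtopology euclidean (g ` SO3)) f \<and>
               (\<forall>\<R>\<in>topspace (SO3_mod G). pG G (inv_into SO3 g (f \<R>)) = \<R>))"
proof
  assume "\<exists>f. continuous_map (SO3_mod G) (subtopology euclidean (g ` SO3)) f \<and>
               (\<forall>\<R>\<in>topspace (SO3_mod G). pG G (inv_into SO3 g (f \<R>)) = \<R>)"
  then obtain f where fc: "continuous_map (SO3_mod G) (subtopology euclidean (g ` SO3)) f"
    and fs: "\<forall>\<R>\<in>topspace (SO3_mod G). pG G (inv_into SO3 g (f \<R>)) = \<R>" by blast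
  have Gs: "G \<subseteq> SO3" "mat 1 \<in> G" using assms(1) unfolding subgroup_SO3_def by auto
  have tS: "topspace SO3_top = SO3" by (simp add: SO3_top_def)
  define F where "F = (\<lambda>R. inv_into SO3 g (f (pG G R)))"
  have top: "topspace (SO3_mod G) = pG G ` SO3" by (simp add: SO3_mod_def topspace_quotient tS)
  have pc: "continuous_map SO3_top (SO3_mod G) (pG G)" unfolding SO3_mod_def by (rule continuous_quotient)
  have ic: "continuous_map (subtopology euclidean (g ` SO3)) SO3_top (inv_into SO3 g)"
    using embedding_inv_cont[OF assms(4)] by (simp add: tS)
  have Fc: "continuous_map SO3_top SO3_top F"
    unfolding F_def using continuous_map_compose[OF continuous_map_compose[OF pc fc] ic] by (simp add: o_def)
  then have Fcon: "continuous_on SO3 F" and FSO: "\<And>R. R \<in> SO3 \<Longrightarrow> F R \<in> SO3"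
    by (auto simp: SO3_top_def)
  have FpG: "\<And>R. R \<in> SO3 \<Longrightarrow> pG G (F R) = pG G R" using fs top unfolding F_def by auto
  have Fin: "\<exists>A\<in>G. F R = R ** A" if R: "R \<in> SO3" for R
  proof -
    have "F R \<in> pG G (F R)" unfolding pG_def using Gs by (auto intro!: exI[of _ "mat 1"])
    then show ?thesis using FpG[OF R] unfolding pG_def by auto
  qed
  define h where "h = (\<lambda>R. transpose R ** F R)"
  have hG: "h R \<in> G" if R: "R \<in> SO3" for R
  proof -
    obtain A where A: "A \<in> G" "F R = R ** A" using Fin[OF R] by blast
    have "h R = (transpose R ** R) ** A" unfolding h_def A(2) by (simp add: matrix_mul_assoc)
    also have "\<dots> = A" using R by (simp add: SO3_def orthogonal_matrix_def)
    finally show ?thesis using A by simp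
  qed
  have hc: "continuous_on SO3 h" unfolding h_def
    by (intro continuous_on_matmul continuous_on_transpose continuous_on_id Fcon)
  have hconst: "h R = h (mat 1)" if R: "R \<in> SO3" for R
  proof -
    have "h R $ i $ j = h (mat 1) $ i $ j" for i j
    proof -
      have "(\<lambda>R. h R $ i $ j) constant_on SO3"
      proof (rule continuous_finite_range_constant[OF SO3_connected])
        show "continuous_on SO3 (\<lambda>R. h R $ i $ j)" by (intro continuous_on_component hc)
        show "finite ((\<lambda>R. h R $ i $ j) ` SO3)"
          by (rule finite_subset[of _ "(\<lambda>A. A $ i $ j) ` G"]) (use hG assms(2) in auto)
      qed
      then show ?thesis using R SO3_id unfolding constant_on_def by metis
    qed
    then show ?thesis by (simp add: vec_eq_iff)
  qed
  obtain B where B: "B \<in> G" "B \<noteq> mat 1" using assms(3) Gs(2) by blast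
  have BS: "B \<in> SO3" using B Gs by auto
  have "pG G B = pG G (mat 1)" using pG_self[OF assms(1)] B Gs by simp
  then have FB: "F B = F (mat 1)" unfolding F_def by simp
  define A where "A = F (mat 1)"
  have AS: "A \<in> SO3" unfolding A_def using FSO SO3_id by blast
  have h1: "h (mat 1) = A" unfolding h_def A_def by simp
  have "B ** h B = (B ** transpose B) ** A" unfolding h_def FB A_def by (simp add: matrix_mul_assoc)
  also have "\<dots> = A" using BS by (simp add: SO3_def orthogonal_matrix_def)
  finally have BA: "B ** A = A" using hconst[OF BS] h1 by simp
  have "B = (B ** A) ** transpose A" using AS by (simp add: SO3_def orthogonal_matrix_def flip: matrix_mul_assoc)
  also have "\<dots> = mat 1" using AS BA by (simp add: SO3_def orthogonal_matrix_def)
  finally show False using B by simp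
qed

end
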